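(* For sufficiently small $r>0$ there is a constant $C$ depending only on $r$ such that for all $z\in\mathbb{B}_n$ and all $w\in D_\psi(z,r)$, $$\Big|2\,\mathrm{Re}\Big(\frac{1}{1-\langle w,z\rangle}\Big)-\frac{1}{1-|z|^2}-\frac{1}{1-|w|^2}\Big|\le C.$$
   Context: $\mathbb{B}_n$ is the open unit ball of $\mathbb{C}^n$, $\langle z,w\rangle=\sum_jz_j\overline{w_j}$. For $z\ne0$, $P_z\zeta=\frac{\langle\zeta,z\rangle}{\langle z,z\rangle}z$, $P_0=0$, $Q_z=I-P_z$, and $D_\psi(z,r)=\{w\in\mathbb{B}_n:|z-P_zw|<r(1-|z|^2)^{3/2},\ |Q_zw|<r(1-|z|^2)\}$. *)

theory Defs
  imports "HOL-Analysis.Analysis"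
begin

definition cinner :: "complex ^ 'n \<Rightarrow> complex ^ 'n \<Rightarrow> complex" where
  "cinner z w = (\<Sum>j\<in>UNIV. z $ j * cnj (w $ j))"

definition unit_ball :: "(complex ^ 'n) set" where
  "unit_ball = {z. norm z < 1}"

definition Pz :: "complex ^ 'n \<Rightarrow> complex ^ 'n \<Rightarrow> complex ^ 'n" where
  "Pz z \<zeta> = (if z = 0 then 0 else (cinner \<zeta> z / cinner z z) *s z)"

definition Qz :: "complex ^ 'n \<Rightarrow> complex ^ 'n \<Rightarrow> complex ^ 'n" where
  "Qz z \<zeta> = \<zeta> - Pz z \<zeta>"

definition D_psi :: "complex ^ 'n \<Rightarrow> real \<Rightarrow> (complex ^ 'n) set" where
  "D_psi z r = {w \<in> unit_ball. norm (z - Pz z w) < r * (1 - (norm z)\<^sup>2) powr (3/2)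
                              \<and> norm (Qz z w) < r * (1 - (norm z)\<^sup>2)}"

end

theory Submission
  imports Defs
begin
lemma real_core:
  fixes \<delta> r dx dy m :: real
  assumes d0: "0 < \<delta>" and d1: "\<delta> \<le> 1" and r0: "0 < r" and r1: "r < 1/4"
    and hd: "dx^2 + dy^2 \<le> r^2 * \<delta>^3" and m0: "0 \<le> m" and m1: "m \<le> 2 * r^2 * \<delta>^2"
  shows "\<bar>2 * (\<delta> - dx) / ((\<delta> - dx)^2 + dy^2) - 1/\<delta> - 1/(2*(\<delta> - dx) - \<delta> - m)\<bar> \<le> 2"
proof -
  define R where "R = \<delta> - dx"
  have "r^2 \<le> (1/4)^2" using r0 r1 by (intro power_mono) auto
  hence r2: "r^2 \<le> 1/16" by (simp add: power2_eq_square)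
  have dxb: "dx^2 \<le> r^2 * \<delta>^3" "dy^2 \<le> r^2 * \<delta>^3" using hd zero_le_power2[of dx] zero_le_power2[of dy] by linarith+
  have d3: "\<delta>^3 \<le> \<delta>^2" using d0 d1 by (simp add: power_decreasing)
  have dx2: "dx^2 \<le> r^2 * \<delta>^2"
    using dxb(1) mult_left_mono[OF d3 zero_le_power2[of r]] by linarith
  have "\<bar>dx\<bar> \<le> r * \<delta>" using dx2 r0 d0
    by (metis abs_of_pos mult_pos_pos power_mult_distrib real_le_rsqrt real_sqrt_abs real_sqrt_le_mono less_eq_real_def)
  moreover have "r * \<delta> \<le> 1/4 * \<delta>" using r1 d0 by (intro mult_right_mono) auto
  ultimately have Rlo: "R \<ge> 3/4 * \<delta>" unfolding R_def by linarith
  have Bd: "2*R - \<delta> \<ge> \<delta>/2" using Rlo by simp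
  have mlo: "m \<le> \<delta>/8" using m1 r2 d0 d1
  proof -
    have "r^2 * \<delta>^2 \<le> (1/16) * \<delta>^2" using r2 by (intro mult_right_mono) auto
    hence "m \<le> 2 * (1/16) * \<delta>^2" using m1 by linarith
    also have "\<dots> \<le> \<delta>/8" using d0 d1 by (simp add: power2_eq_square mult_le_cancel_right1)
    finally show ?thesis .
  qed
  define B where "B = 2*R - \<delta> - m"
  have Blo: "B \<ge> 3/8*\<delta>" using Bd mlo unfolding B_def by simp
  define T1 where "T1 = 2*dx^2/(R*\<delta>*(2*R-\<delta>))"
  define T2 where "T2 = m/(B*(2*R-\<delta>))"
  define T3 where "T3 = 2*R*dy^2/(R^2*(R^2+dy^2))"
  have Rp: "R > 0" "2*R-\<delta> > 0" "B > 0" "R^2+dy^2 > 0" using Rlo Bd Blo d0 by (auto intro: add_pos_nonneg)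
  have E: "2 * R / (R^2 + dy^2) - 1/\<delta> - 1/B = -(T1+T2+T3)"
  proof -
    have dxR: "dx = \<delta> - R" unfolding R_def by simp
    have mB: "m = 2*R - \<delta> - B" unfolding B_def by simp
    have h1: "1/\<delta> + 1/(2*R-\<delta>) = 2/R + T1"
      unfolding T1_def dxR using Rp d0 by (simp add: field_simps power2_eq_square; simp add: algebra_simps)
    have h2: "1/B = 1/(2*R-\<delta>) + T2"
    proof -
      have g: "\<And>K B m::real. K > 0 \<Longrightarrow> B > 0 \<Longrightarrow> m = K - B \<Longrightarrow> 1/B = 1/K + m/(B*K)"
        by (simp add: field_simps)
      show ?thesis unfolding T2_def by (rule g) (use Rp mB in auto)
    qed
    have h3: "2 * R / (R^2 + dy^2) = 2/R - T3"
    proof -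
      have g0: "\<And>R S::real. R > 0 \<Longrightarrow> S > 0 \<Longrightarrow> 2 * R / S = 2/R - 2*R*(S - R^2)/(R^2*S)"
        by (simp add: field_simps power2_eq_square)
      have g: "\<And>R I::real. R > 0 \<Longrightarrow> R^2 + I > 0 \<Longrightarrow> 2 * R / (R^2 + I) = 2/R - 2*R*I/(R^2*(R^2+I))"
        using g0 by fastforce
      show ?thesis unfolding T3_def by (rule g) (use Rp in auto)
    qed
    show ?thesis using h1 h2 h3 by linarith
  qed
  have t1: "0 \<le> T1" "T1 \<le> 1/3"
  proof -
    show "0 \<le> T1" unfolding T1_def using Rp d0 by simp
    have "T1 \<le> (2*r^2*\<delta>^3)/((3/4*\<delta>)*\<delta>*(\<delta>/2))" unfolding T1_def
    proof (rule frac_le)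
      show "0 \<le> 2*r^2*\<delta>^3" using d0 by simp
      show "2*dx^2 \<le> 2*r^2*\<delta>^3" using dxb(1) by simp
      show "0 < (3/4*\<delta>)*\<delta>*(\<delta>/2)" using d0 by simp
      have "(3/4*\<delta>)*\<delta> \<le> R*\<delta>" using Rlo d0 by (intro mult_right_mono) auto
      thus "(3/4*\<delta>)*\<delta>*(\<delta>/2) \<le> R*\<delta>*(2*R-\<delta>)"
        using Bd d0 Rp by (intro mult_mono) auto
    qed
    also have "\<dots> = 16/3 * r^2" using d0 by (simp add: field_simps power3_eq_cube)
    also have "\<dots> \<le> 1/3" using r2 by simp
    finally show "T1 \<le> 1/3" .
  qed
  have t2: "0 \<le> T2" "T2 \<le> 2/3"
  proof -
    show "0 \<le> T2" unfolding T2_def using Rp m0 by simp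
    have "T2 \<le> (2*r^2*\<delta>^2)/((3/8*\<delta>)*(\<delta>/2))" unfolding T2_def
    proof (rule frac_le)
      show "0 \<le> 2*r^2*\<delta>^2" using d0 by simp
      show "m \<le> 2*r^2*\<delta>^2" using m1 by simp
      show "0 < (3/8*\<delta>)*(\<delta>/2)" using d0 by simp
      show "(3/8*\<delta>)*(\<delta>/2) \<le> B*(2*R-\<delta>)"
        using Bd d0 Rp Blo by (intro mult_mono) auto
    qed
    also have "\<dots> = 32/3 * r^2" using d0 by (simp add: field_simps power2_eq_square)
    also have "\<dots> \<le> 2/3" using r2 by simp
    finally show "T2 \<le> 2/3" .
  qed
  have t3: "0 \<le> T3" "T3 \<le> 1"
  proof -
    show "0 \<le> T3" unfolding T3_def using Rp by simp
    have g: "\<And>R a S::real. R > 0 \<Longrightarrow> S > 0 \<Longrightarrow> 2*R*a/(R^2*S) = 2*a/(R*S)"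
      by (simp add: power2_eq_square)
    have "T3 = 2*dy^2/(R*(R^2+dy^2))" unfolding T3_def using Rp
      by (intro g) auto
    also have "\<dots> \<le> 2*dy^2/(R*R^2)"
    proof (rule frac_le)
      show "0 \<le> 2*dy^2" by simp
      show "2*dy^2 \<le> 2*dy^2" by simp
      show "0 < R*R^2" using Rp by simp
      show "R*R^2 \<le> R*(R^2+dy^2)" using Rp by (intro mult_left_mono) auto
    qed
    also have "\<dots> = 2*dy^2/R^3" by (simp add: power2_eq_square power3_eq_cube)
    also have "\<dots> \<le> (2*r^2*\<delta>^3)/((3/4*\<delta>)^3)"
    proof (rule frac_le)
      show "0 \<le> 2*r^2*\<delta>^3" using d0 by simp
      show "2*dy^2 \<le> 2*r^2*\<delta>^3" using dxb(2) by simp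
      show "0 < (3/4*\<delta>)^3" using d0 by simp
      show "(3/4*\<delta>)^3 \<le> R^3"
        using Rlo d0 by (intro power_mono) auto
    qed
    also have "\<dots> = 128/27 * r^2" using d0 by (simp add: field_simps power3_eq_cube)
    also have "\<dots> \<le> 1" using r2 by simp
    finally show "T3 \<le> 1" .
  qed
  show ?thesis using E t1 t2 t3 unfolding R_def B_def by linarith
qed

lemma cinner_self: "cinner x x = complex_of_real ((norm x)^2)"
proof -
  have "(norm x)^2 = (\<Sum>i\<in>UNIV. (cmod (x$i))^2)"
    by (simp add: norm_vec_def L2_set_def sum_nonneg)
  hence "complex_of_real ((norm x)^2) = (\<Sum>i\<in>UNIV. complex_of_real ((cmod (x$i))^2))" by simp
  also have "\<dots> = cinner x x" unfolding cinner_def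
    by (rule sum.cong[OF refl]) (metis complex_norm_square of_real_power)
  finally show ?thesis by simp
qed

lemma cinner_diff_left: "cinner (x - y) v = cinner x v - cinner y v"
  unfolding cinner_def by (simp add: algebra_simps sum_subtractf)
lemma cinner_diff_right: "cinner v (x - y) = cinner v x - cinner v y"
  unfolding cinner_def by (simp add: algebra_simps sum_subtractf)
lemma cinner_scale_left: "cinner (c *s x) v = c * cinner x v"
  unfolding cinner_def by (simp add: sum_distrib_left algebra_simps)
lemma cinner_scale_right: "cinner v (c *s x) = cnj c * cinner v x"
  unfolding cinner_def by (simp add: sum_distrib_left algebra_simps)
lemma cinner_cnj: "cnj (cinner x y) = cinner y x"
  unfolding cinner_def by (simp add: algebra_simps)
lemma cinner_zero_right: "cinner x 0 = 0"
  unfolding cinner_def by simp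

lemma vec_facts:
  fixes z w :: "complex ^ 'n"
  assumes "norm z \<le> 1"
  shows "(cmod (cinner w z - of_real ((norm z)^2)))^2 \<le> (norm (z - Pz z w))^2
     \<and> (norm w)^2 + (norm z)^2 - 2 * Re (cinner w z) = (norm (z - Pz z w))^2 + (norm (Qz z w))^2"
proof (cases "z = 0")
  case True
  then show ?thesis by (simp add: Pz_def Qz_def cinner_zero_right)
next
  case False
  define t where "t = (norm z)^2"
  define p where "p = cinner w z"
  define N where "N = (norm w)^2"
  have tp: "t > 0" using False unfolding t_def by simp
  have t1: "t \<le> 1" using assms unfolding t_def by (simp add: power_le_one)
  define a where "a = p / of_real t"
  have zz: "cinner z z = of_real t" unfolding t_def by (rule cinner_self)
  have ww: "cinner w w = of_real N" unfolding N_def by (rule cinner_self)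
  have zw: "cinner z w = cnj p" unfolding p_def by (simp add: cinner_cnj)
  have P: "Pz z w = a *s z" using False unfolding Pz_def a_def p_def zz by simp
  have zP: "z - Pz z w = (1 - a) *s z" unfolding P by (simp add: vector_sub_rdistrib)
  have X: "complex_of_real ((norm (z - Pz z w))^2) = (1-a) * cnj (1-a) * of_real t"
    unfolding cinner_self[symmetric] zP cinner_scale_left cinner_scale_right zz by simp
  have Y: "complex_of_real ((norm (Qz z w))^2) = of_real N - cnj a * p - a * cnj p + a * cnj a * of_real t"
    unfolding cinner_self[symmetric] Qz_def P
    by (simp add: cinner_diff_left cinner_diff_right cinner_scale_left cinner_scale_right zz ww zw p_def[symmetric] algebra_simps)
  have X2: "complex_of_real ((norm (z - Pz z w))^2) = (p - of_real t) * cnj (p - of_real t) / of_real t"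
    unfolding X a_def using tp by (simp add: field_simps)
  have "complex_of_real ((cmod (p - of_real t))^2) = (p - of_real t) * cnj (p - of_real t)"
    by (metis complex_norm_square of_real_power)
  hence X3: "(norm (z - Pz z w))^2 = (cmod (p - of_real t))^2 / t"
    using X2 by (metis of_real_divide of_real_eq_iff)
  have c1: "(cmod (p - of_real t))^2 \<le> (cmod (p - of_real t))^2 / t"
    using tp t1 by (simp add: le_divide_eq mult_left_le)
  have S: "complex_of_real ((norm (z - Pz z w))^2 + (norm (Qz z w))^2) = of_real N + of_real t - p - cnj p"
    unfolding of_real_add X Y a_def using tp by (simp add: field_simps)
  have "(norm (z - Pz z w))^2 + (norm (Qz z w))^2 = Re (of_real N + of_real t - p - cnj p)"
    using arg_cong[OF S, of Re] by simp
  also have "\<dots> = N + t - 2 * Re p" by simp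
  finally show ?thesis using X3 c1 unfolding N_def t_def p_def by simp
qed

theorem lemma2p12:
  shows "\<exists>r0>0. \<forall>r. 0 < r \<and> r < r0 \<longrightarrow>
           (\<exists>C::real. \<forall>(z::complex ^ 'n) \<in> unit_ball. \<forall>w \<in> D_psi z r.
              \<bar>2 * Re (1 / (1 - cinner w z)) - 1 / (1 - (norm z)\<^sup>2) - 1 / (1 - (norm w)\<^sup>2)\<bar> \<le> C)"
proof (rule exI[of _ "1/4"], rule conjI, simp, intro allI impI)
  fix r :: real assume r: "0 < r \<and> r < 1/4"
  show "\<exists>C::real. \<forall>(z::complex ^ 'n) \<in> unit_ball. \<forall>w \<in> D_psi z r.
              \<bar>2 * Re (1 / (1 - cinner w z)) - 1 / (1 - (norm z)\<^sup>2) - 1 / (1 - (norm w)\<^sup>2)\<bar> \<le> C"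
  proof (intro exI[of _ 2] ballI)
    fix z :: "complex ^ 'n" and w assume z: "z \<in> unit_ball" and w: "w \<in> D_psi z r"
    define t where "t = (norm z)^2"
    define \<delta> where "\<delta> = 1 - t"
    define p where "p = cinner w z"
    define N where "N = (norm w)^2"
    define X where "X = (norm (z - Pz z w))^2"
    define Y where "Y = (norm (Qz z w))^2"
    have nz: "norm z < 1" using z unfolding unit_ball_def by simp
    have "(norm z)^2 < 1^2" using nz by (intro power_strict_mono) auto
    hence t0: "0 \<le> t" "t < 1" unfolding t_def by auto
    have d0: "0 < \<delta>" "\<delta> \<le> 1" unfolding \<delta>_def using t0 by auto
    have VF: "(cmod (p - of_real t))^2 \<le> X" "N + t - 2 * Re p = X + Y"
      using vec_facts[of z w] nz unfolding t_def p_def N_def X_def Y_def by auto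
    have w1: "norm (z - Pz z w) < r * \<delta> powr (3/2)" "norm (Qz z w) < r * \<delta>"
      using w unfolding D_psi_def \<delta>_def t_def by auto
    have pw: "(\<delta> powr (3/2))^2 = \<delta>^3"
    proof -
      have "(\<delta> powr (3/2))^2 = \<delta> powr (3/2) * \<delta> powr (3/2)" by (simp add: power2_eq_square)
      also have "\<dots> = \<delta> powr 3" by (simp add: powr_add[symmetric])
      also have "\<dots> = \<delta>^3" using d0 by (simp add: powr_numeral)
      finally show ?thesis .
    qed
    have Xb: "X \<le> r^2 * \<delta>^3"
    proof -
      have "X \<le> (r * \<delta> powr (3/2))^2" unfolding X_def
        using w1(1) by (intro power_mono) auto
      thus ?thesis using pw by (simp add: power_mult_distrib)
    qed
    have Yb: "Y \<le> r^2 * \<delta>^2"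
    proof -
      have "Y \<le> (r * \<delta>)^2" unfolding Y_def
        using w1(2) by (intro power_mono) auto
      thus ?thesis by (simp add: power_mult_distrib)
    qed
    have d32: "\<delta>^3 \<le> \<delta>^2" using d0 by (simp add: power_decreasing)
    have "r^2 * \<delta>^3 \<le> r^2 * \<delta>^2" using d32 by (simp add: mult_left_mono)
    hence mb: "X + Y \<le> 2 * r^2 * \<delta>^2" using Xb Yb by simp
    have m0: "0 \<le> X + Y" unfolding X_def Y_def by simp
    define dx where "dx = Re p - t"
    define dy where "dy = Im p"
    have hd: "dx^2 + dy^2 \<le> r^2 * \<delta>^3"
    proof -
      have "dx^2 + dy^2 = (cmod (p - of_real t))^2" unfolding dx_def dy_def
        by (simp add: cmod_power2)
      thus ?thesis using VF(1) Xb by simp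
    qed
    have core: "\<bar>2 * (\<delta> - dx) / ((\<delta> - dx)^2 + dy^2) - 1/\<delta> - 1/(2*(\<delta> - dx) - \<delta> - (X+Y))\<bar> \<le> 2"
      by (rule real_core[OF d0 _ _ hd m0 mb]) (use r in auto)
    have e1: "Re (1 / (1 - p)) = (\<delta> - dx) / ((\<delta> - dx)^2 + dy^2)"
      unfolding dx_def dy_def \<delta>_def by (simp add: Re_divide power2_eq_square)
    have e2: "2*(\<delta> - dx) - \<delta> - (X+Y) = 1 - N"
      using VF(2) unfolding dx_def \<delta>_def by simp
    show "\<bar>2 * Re (1 / (1 - cinner w z)) - 1 / (1 - (norm z)\<^sup>2) - 1 / (1 - (norm w)\<^sup>2)\<bar> \<le> 2"
    proof -
      have f: "2 * Re (1 / (1 - cinner w z)) = 2 * (\<delta> - dx) / ((\<delta> - dx)^2 + dy^2)"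
        using e1 unfolding p_def by simp
      have g1: "1 - (norm z)\<^sup>2 = \<delta>" unfolding \<delta>_def t_def by simp
      have g2: "1 - (norm w)\<^sup>2 = 2*(\<delta> - dx) - \<delta> - (X+Y)" using e2 unfolding N_def by simp
      show ?thesis unfolding f g1 g2 by (rule core)
    qed
  qed
qed

end
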